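(* For every fixed $\theta\in\mathbb R$, the map $\tau\mapsto s_1(\theta,\tau)=\mathbb E[Q\mid\Theta=\theta,A(\tau)=1]$ is strictly increasing on $(-x_u,x_q)$.
   Context: Setup. Let $Q\in\{0,1\}$ be a random variable with $\mathbb P(Q=1)=\pi\in(0,1)$, and let $(\Theta,\Gamma)$ be a real-valued random vector whose conditional joint density given $Q=1$ is $h_q(\theta,\gamma)$ and given $Q=0$ is $h_u(\theta,\gamma)$, both strictly positive on $\mathbb R^2$. Monotone likelihood ratio assumption: $l(\theta,\gamma)=h_q(\theta,\gamma)/h_u(\theta,\gamma)$ is continuous and strictly increasing in each of $\theta$ and $\gamma$, and for each $\theta$ the map $\gamma\mapsto l(\theta,\gamma)$ has infimum $0$ and supremum $+\infty$. Fix payoffs $x_q>0$, $x_u>0$. For $\tau\in(-x_u,x_q)$ let $A(\tau)=\mathbb 1\{l(\Theta,\Gamma)>\frac{(1-\pi)(x_u+\tau)}{\pi(x_q-\tau)}\}$. Define $s_1(\theta,\tau)=\mathbb E[Q\mid\Theta=\theta,A(\tau)=1]$. *)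

theory Defs
  imports "HOL-Analysis.Analysis"
begin

definition lik_ratio :: "(real \<Rightarrow> real \<Rightarrow> real) \<Rightarrow> (real \<Rightarrow> real \<Rightarrow> real) \<Rightarrow> real \<Rightarrow> real \<Rightarrow> real" where
  "lik_ratio hq hu \<theta> \<gamma> = hq \<theta> \<gamma> / hu \<theta> \<gamma>"

definition threshold :: "real \<Rightarrow> real \<Rightarrow> real \<Rightarrow> real \<Rightarrow> real" where
  "threshold \<pi> xq xu \<tau> = (1 - \<pi>) * (xu + \<tau>) / (\<pi> * (xq - \<tau>))"

text \<open>s_1(theta,tau) = E[Q | Theta = theta, A(tau) = 1], computed by Bayes' rule from the
  joint conditional densities: the conditional probability of Q = 1 given Theta = theta and
  l(theta,Gamma) > threshold.\<close>
definition s1 :: "real \<Rightarrow> (real \<Rightarrow> real \<Rightarrow> real) \<Rightarrow> (real \<Rightarrow> real \<Rightarrow> real) \<Rightarrow> real \<Rightarrow> real \<Rightarrow> real \<Rightarrow> real \<Rightarrow> real" where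
  "s1 \<pi> hq hu xq xu \<theta> \<tau> =
     (let c = threshold \<pi> xq xu \<tau>;
          Sq = (LINT \<gamma>|lborel. indicator {g. lik_ratio hq hu \<theta> g > c} \<gamma> * hq \<theta> \<gamma>);
          Su = (LINT \<gamma>|lborel. indicator {g. lik_ratio hq hu \<theta> g > c} \<gamma> * hu \<theta> \<gamma>)
      in \<pi> * Sq / (\<pi> * Sq + (1 - \<pi>) * Su))"

end

theory Submission
  imports Defs
begin

lemma pos_int:
  fixes k :: "real \<Rightarrow> real"
  assumes int: "integrable lborel (\<lambda>x. indicator S x * k x)" and S: "S \<in> sets lborel"
    and m: "emeasure lborel S \<noteq> 0" and pos: "\<And>x. x \<in> S \<Longrightarrow> 0 < k x"
  shows "0 < (LINT x|lborel. indicator S x * k x)"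
proof -
  have nn: "\<And>x. 0 \<le> indicator S x * k x"
    by (simp add: indicator_def less_imp_le pos)
  have ge: "0 \<le> (LINT x|lborel. indicator S x * k x)" by (rule integral_nonneg_AE) (simp add: nn)
  have pos_ne: "\<And>x. x \<in> S \<Longrightarrow> k x \<noteq> 0" using pos by force
  have eq: "{x\<in>space lborel. \<not> (indicator S x * k x = 0)} = S"
    using pos_ne by (auto simp: indicator_def)
  have "\<not> (AE x in lborel. indicator S x * k x = 0)"
    using AE_iff_measurable[OF S eq] m by simp
  moreover have "AE x in lborel. 0 \<le> indicator S x * k x" using nn by simp
  ultimately have "(LINT x|lborel. indicator S x * k x) \<noteq> 0"
    using integral_nonneg_eq_0_iff_AE[OF int] by simp
  with ge show ?thesis by simp
qed

lemma Ioi_pos: "emeasure lborel {(b::real)<..} \<noteq> 0"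
proof -
  have "emeasure lborel {b<..b+1} \<le> emeasure lborel {b<..}" by (rule emeasure_mono) auto
  hence "0 < emeasure lborel {b<..}" using less_le_trans[OF zero_less_one] by auto
  thus ?thesis by simp
qed

lemma Ioc_pos: "(a::real) < b \<Longrightarrow> emeasure lborel {a<..b} \<noteq> 0" by simp

lemma frac_lt: "0 < (d1::real) \<Longrightarrow> 0 < d2 \<Longrightarrow> x*d2 < y*d1 \<Longrightarrow> x/d1 < y/d2"
  by (simp add: field_simps)

lemma s_ineq:
  fixes p A1 A2 B1 B2 l :: real
  assumes "0<p" "p<1" "A1 \<le> l*A2" "B1 > l*B2" "A2>0" "B2>0" "l > 0" "A1 \<ge> 0"
  shows "p*(A1+B1)/(p*(A1+B1)+(1-p)*(A2+B2)) < p*B1/(p*B1+(1-p)*B2)"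
proof -
  have "A1*B2 \<le> l*A2*B2" using assms by (simp add: mult_right_mono)
  also have "\<dots> < B1*A2" using assms by (simp add: mult.commute mult.left_commute)
  finally have k: "A1*B2 < B1*A2" .
  have B1: "B1 > 0" using assms by (metis mult_pos_pos order.strict_trans)
  have d1: "p*(A1+B1)+(1-p)*(A2+B2) > 0" proof -
    have "A1+B1>0" "A2+B2>0" using assms B1 by linarith+
    thus ?thesis using assms by (simp add: add_pos_pos)
  qed
  have d2: "p*B1+(1-p)*B2 > 0" using assms B1 by (intro add_pos_pos mult_pos_pos) auto
  have e: "p*(A1+B1)*(p*B1+(1-p)*B2) < p*B1*(p*(A1+B1)+(1-p)*(A2+B2))"
  proof -
    have "p*B1*(p*(A1+B1)+(1-p)*(A2+B2)) - p*(A1+B1)*(p*B1+(1-p)*B2) = p*(1-p)*(B1*A2 - A1*B2)"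
      by (simp add: algebra_simps)
    moreover have "p*(1-p)*(B1*A2 - A1*B2) > 0" using assms k by (intro mult_pos_pos) auto
    ultimately show ?thesis by linarith
  qed
  show ?thesis by (rule frac_lt[OF d1 d2 e])
qed

lemma threshold_mono:
  fixes p xq xu r s :: real
  assumes "0<p" "p<1" "-xu<r" "r<s" "s<xq"
  shows "0 < threshold p xq xu r" "threshold p xq xu r < threshold p xq xu s"
proof -
  have r1: "xu + r > 0" "xq - r > 0" "xu + s > 0" "xq - s > 0" using assms by linarith+
  show "0 < threshold p xq xu r" unfolding threshold_def using assms r1
    by (intro divide_pos_pos mult_pos_pos) auto
  have d1: "p*(xq-r) > 0" "p*(xq-s) > 0" using assms r1 by auto
  have "(1-p)*(xu+s)*(p*(xq-r)) - (1-p)*(xu+r)*(p*(xq-s)) = (1-p)*p*((s-r)*(xu+xq))"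
    by (simp add: algebra_simps)
  moreover have "(1-p)*p*((s-r)*(xu+xq)) > 0" using assms r1 by (intro mult_pos_pos) auto
  ultimately have "(1-p)*(xu+r)*(p*(xq-s)) < (1-p)*(xu+s)*(p*(xq-r))" by linarith
  thus "threshold p xq xu r < threshold p xq xu s" unfolding threshold_def
    by (rule frac_lt[OF d1(1) d1(2)])
qed

lemma crossing:
  fixes L :: "real \<Rightarrow> real" and c :: real
  assumes cont: "continuous_on UNIV L" and mono: "strict_mono L" and pos: "\<And>g. 0 < L g"
    and inf: "(INF g. L g) = 0" and sup: "\<not> bdd_above (range L)" and c: "0 < c"
  shows "\<exists>g0. L g0 = c"
proof -
  have bb: "bdd_below (range L)" by (rule bdd_belowI[where m=0]) (auto intro: less_imp_le pos)
  have "(INF g. L g) < c" using inf c by simp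
  then obtain g1 where g1: "L g1 < c" using cINF_less_iff[OF _ bb] by auto
  have "\<exists>g2. L g2 > c"
  proof (rule ccontr)
    assume "\<not> (\<exists>g2. L g2 > c)"
    hence "\<And>x. x \<in> range L \<Longrightarrow> x \<le> c" by (auto simp: not_less)
    hence "bdd_above (range L)" by (rule bdd_aboveI)
    with sup show False by simp
  qed
  then obtain g2 where g2: "L g2 > c" by blast
  have "L g1 < L g2" using g1 g2 by simp
  hence "g1 < g2" using strict_mono_less[OF mono] by simp
  have cs: "continuous_on {g1..g2} L" using cont by (rule continuous_on_subset) simp
  have "\<exists>x. g1 \<le> x \<and> x \<le> g2 \<and> L x = c"
    by (rule IVT'[OF _ _ _ cs]) (use g1 g2 \<open>g1 < g2\<close> in auto)
  thus ?thesis by blast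
qed

theorem mainTheorem3:
  fixes \<pi> xq xu \<theta> :: real and hq hu :: "real \<Rightarrow> real \<Rightarrow> real"
  assumes pi: "0 < \<pi>" "\<pi> < 1"
    and pay: "0 < xq" "0 < xu"
    and hq_pos: "\<And>t g. 0 < hq t g" and hu_pos: "\<And>t g. 0 < hu t g"
    and hq_dens: "integrable lborel (\<lambda>z::real \<times> real. hq (fst z) (snd z))"
                 "(LINT z|lborel. hq (fst z) (snd z)) = 1"
    and hu_dens: "integrable lborel (\<lambda>z::real \<times> real. hu (fst z) (snd z))"
                 "(LINT z|lborel. hu (fst z) (snd z)) = 1"
    and hq_sec: "\<And>t. integrable lborel (hq t)"
    and hu_sec: "\<And>t. integrable lborel (hu t)"
    and l_cont: "continuous_on UNIV (\<lambda>z::real \<times> real. lik_ratio hq hu (fst z) (snd z))"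
    and l_mono1: "\<And>g. strict_mono (\<lambda>t. lik_ratio hq hu t g)"
    and l_mono2: "\<And>t. strict_mono (lik_ratio hq hu t)"
    and l_inf: "\<And>t. (INF g. lik_ratio hq hu t g) = 0"
    and l_sup: "\<And>t. \<not> bdd_above (range (lik_ratio hq hu t))"
  shows "strict_mono_on {-xu<..<xq} (s1 \<pi> hq hu xq xu \<theta>)"
  
proof -
  define L where "L = lik_ratio hq hu \<theta>"
  define f where "f = hq \<theta>"
  define h where "h = hu \<theta>"
  have Lfh: "\<And>x. f x = L x * h x" unfolding L_def f_def h_def lik_ratio_def
    using hu_pos by (simp add: less_imp_neq[symmetric])
  have hpos: "\<And>x. 0 < h x" unfolding h_def using hu_pos by auto
  have Lpos: "\<And>x. 0 < L x" unfolding L_def lik_ratio_def using hq_pos hu_pos by (simp add: divide_pos_pos)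
  have Lmono: "strict_mono L" unfolding L_def by (rule l_mono2)
  have Lcont: "continuous_on UNIV L"
  proof -
    have "continuous_on UNIV (\<lambda>g::real. (\<lambda>z::real \<times> real. lik_ratio hq hu (fst z) (snd z)) (\<theta>, g))"
      by (rule continuous_on_compose2[OF l_cont]) (auto intro!: continuous_intros)
    thus ?thesis unfolding L_def by simp
  qed
  have fint: "integrable lborel f" unfolding f_def by (rule hq_sec)
  have hint: "integrable lborel h" unfolding h_def by (rule hu_sec)
  have intS: "integrable lborel (\<lambda>x. indicator S x * k x)"
    if "S \<in> sets lborel" "integrable lborel k" for S and k :: "real \<Rightarrow> real"
    using integrable_mult_indicator[OF that] by simp
  have cross: "\<exists>g0. L g0 = c" if "0 < c" for c
    by (rule crossing[OF Lcont Lmono Lpos _ _ that]) (simp_all add: L_def l_inf l_sup)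
  have seteq: "\<And>g0. {g. lik_ratio hq hu \<theta> g > L g0} = {g0<..}"
    unfolding L_def[symmetric] using Lmono by (auto simp: strict_mono_less)
  have s1eq: "\<And>r g0. threshold \<pi> xq xu r = L g0 \<Longrightarrow> s1 \<pi> hq hu xq xu \<theta> r =
     \<pi> * (LINT x|lborel. indicator {g0<..} x * f x) /
       (\<pi> * (LINT x|lborel. indicator {g0<..} x * f x) + (1-\<pi>) * (LINT x|lborel. indicator {g0<..} x * h x))"
    unfolding s1_def Let_def f_def h_def by (simp only: seteq)
  show ?thesis
  proof (rule strict_mono_onI)
    fix r s assume r: "r \<in> {-xu<..<xq}" and s: "s \<in> {-xu<..<xq}" and rs: "r < s"
    have tr: "0 < threshold \<pi> xq xu r" "threshold \<pi> xq xu r < threshold \<pi> xq xu s"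
      using threshold_mono[OF pi(1) pi(2), of xu r s xq] r s rs by auto
    obtain a where a: "L a = threshold \<pi> xq xu r" using cross[OF tr(1)] by blast
    obtain b where b: "L b = threshold \<pi> xq xu s" using cross[OF less_trans[OF tr(1) tr(2)]] by blast
    have "L a < L b" using a b tr(2) by simp
    hence ab: "a < b" using strict_mono_less[OF Lmono] by simp
    define A1 where "A1 = (LINT x|lborel. indicator {a<..b} x * f x)"
    define A2 where "A2 = (LINT x|lborel. indicator {a<..b} x * h x)"
    define B1 where "B1 = (LINT x|lborel. indicator {b<..} x * f x)"
    define B2 where "B2 = (LINT x|lborel. indicator {b<..} x * h x)"
    have split: "(LINT x|lborel. indicator {a<..} x * k x) =
        (LINT x|lborel. indicator {a<..b} x * k x) + (LINT x|lborel. indicator {b<..} x * k x)"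
      if k: "integrable lborel k" for k :: "real \<Rightarrow> real"
    proof -
      have "\<And>x. indicator {a<..} x * k x = indicator {a<..b} x * k x + indicator {b<..} x * k x"
        using ab by (auto split: split_indicator)
      hence "(LINT x|lborel. indicator {a<..} x * k x) =
         (LINT x|lborel. indicator {a<..b} x * k x + indicator {b<..} x * k x)" by simp
      also have "\<dots> = (LINT x|lborel. indicator {a<..b} x * k x) + (LINT x|lborel. indicator {b<..} x * k x)"
      proof -
        have i1: "integrable lborel (\<lambda>x. indicator {a<..b} x * k x)" by (rule intS) (auto simp: k)
        have i2: "integrable lborel (\<lambda>x. indicator {b<..} x * k x)" by (rule intS) (auto simp: k)
        show ?thesis by (rule Bochner_Integration.integral_add[OF i1 i2])
      qed
      finally show "(LINT x|lborel. indicator {a<..} x * k x) =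
        (LINT x|lborel. indicator {a<..b} x * k x) + (LINT x|lborel. indicator {b<..} x * k x)" .
    qed
    have sr: "s1 \<pi> hq hu xq xu \<theta> r = \<pi>*(A1+B1)/(\<pi>*(A1+B1)+(1-\<pi>)*(A2+B2))"
      using s1eq[OF a[symmetric]] split[OF fint] split[OF hint] unfolding A1_def A2_def B1_def B2_def
      by simp
    have ss: "s1 \<pi> hq hu xq xu \<theta> s = \<pi>*B1/(\<pi>*B1+(1-\<pi>)*B2)"
      using s1eq[OF b[symmetric]] unfolding B1_def B2_def by simp
    have A2p: "A2 > 0" unfolding A2_def
      by (rule pos_int[OF intS[OF _ hint]]) (auto simp: Ioc_pos[OF ab] hpos)
    have B2p: "B2 > 0" unfolding B2_def
      by (rule pos_int[OF intS[OF _ hint]]) (auto simp: Ioi_pos hpos)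
    have A1n: "A1 \<ge> 0" unfolding A1_def
      by (rule integral_nonneg_AE) (auto split: split_indicator simp: Lfh hpos Lpos less_imp_le)
    have lp: "L b > 0" by (rule Lpos)
    have A1le: "A1 \<le> L b * A2"
    proof -
      have "A1 \<le> (LINT x|lborel. L b * (indicator {a<..b} x * h x))" unfolding A1_def
      proof (rule integral_mono)
        show "integrable lborel (\<lambda>x. indicator {a<..b} x * f x)" by (auto intro!: intS fint)
        show "integrable lborel (\<lambda>x. L b * (indicator {a<..b} x * h x))" by (auto intro!: intS hint)
        fix x
        show "indicator {a<..b} x * f x \<le> L b * (indicator {a<..b} x * h x)"
        proof (cases "x \<in> {a<..b}")
          case True
          hence "L x \<le> L b" using Lmono by (auto simp: strict_mono_less_eq)
          thus ?thesis using True hpos[of x] by (simp add: Lfh mult_right_mono)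
        qed simp
      qed
      also have "\<dots> = L b * A2" unfolding A2_def by simp
      finally show ?thesis .
    qed
    have B1gt: "B1 > L b * B2"
    proof -
      have "0 < (LINT x|lborel. indicator {b<..} x * (f x - L b * h x))"
      proof (rule pos_int)
        show "integrable lborel (\<lambda>x. indicator {b<..} x * (f x - L b * h x))"
          by (auto intro!: intS fint hint)
        fix x assume "x \<in> {b<..}"
        hence "L x > L b" using Lmono by (auto simp: strict_mono_less)
        thus "0 < f x - L b * h x" using hpos[of x] by (simp add: Lfh algebra_simps)
      qed (auto simp: Ioi_pos)
      also have "(LINT x|lborel. indicator {b<..} x * (f x - L b * h x)) =
         (LINT x|lborel. indicator {b<..} x * f x - L b * (indicator {b<..} x * h x))"
        by (simp add: algebra_simps)
      also have "\<dots> = B1 - L b * B2" unfolding B1_def B2_def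
        by (subst Bochner_Integration.integral_diff) (auto intro!: intS fint hint)
      finally show ?thesis by simp
    qed
    show "s1 \<pi> hq hu xq xu \<theta> r < s1 \<pi> hq hu xq xu \<theta> s"
      unfolding sr ss by (rule s_ineq[OF pi(1) pi(2) A1le B1gt A2p B2p lp A1n])
  qed
qed

end
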